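(* Let $A, B, \alpha, \beta, \gamma, \delta \in \mathbb{R}$ with $A + B \neq 0$. Then the ODE \[ u'''(z) - B\,u(z)\,u''(z) - A\,u'(z)^2 + \alpha\,u''(z) + \beta\,u'(z) + \gamma\,u(z) + \delta = 0 \] has no transcendental entire solutions.
   Context: Transcendental entire means entire on $\mathbb{C}$ and not a polynomial. *)

theory Defs
  imports "HOL-Complex_Analysis.Complex_Analysis" "HOL-Computational_Algebra.Polynomial"
begin

definition transcendental_entire :: "(complex \<Rightarrow> complex) \<Rightarrow> bool" where
  "transcendental_entire u \<longleftrightarrow> u holomorphic_on UNIV \<and> \<not> (\<exists>p. \<forall>z. u z = poly p z)"

end

theory Submission
  imports Defs
begin


definition MM :: "(complex \<Rightarrow> complex) \<Rightarrow> real \<Rightarrow> real" where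
  "MM f r = Sup ((\<lambda>z. cmod (f z)) ` sphere 0 r)"

lemma MM_ge:
  assumes f: "f holomorphic_on UNIV" and z: "cmod z = r"
  shows "cmod (f z) \<le> MM f r"
proof -
  have c: "continuous_on (sphere 0 r) (\<lambda>z. cmod (f z))"
    using f by (intro continuous_intros holomorphic_on_imp_continuous_on) (auto intro: holomorphic_on_subset)
  have "compact ((\<lambda>z. cmod (f z)) ` sphere 0 r)"
    by (rule compact_continuous_image[OF c]) simp
  then have "bdd_above ((\<lambda>z. cmod (f z)) ` sphere 0 r)"
    by (meson bounded_imp_bdd_above compact_imp_bounded)
  then show ?thesis unfolding MM_def
    using z by (intro cSup_upper) auto
qed

lemma MM_attained:
  assumes f: "f holomorphic_on UNIV" and r: "r \<ge> 0"
  shows "\<exists>z. cmod z = r \<and> cmod (f z) = MM f r"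
proof -
  have c: "continuous_on (sphere 0 r) (\<lambda>z. cmod (f z))"
    using f by (intro continuous_intros holomorphic_on_imp_continuous_on) (auto intro: holomorphic_on_subset)
  have ne: "sphere (0::complex) r \<noteq> {}" using r by simp
  obtain x where x: "x \<in> sphere 0 r" "\<forall>y\<in>sphere 0 r. cmod (f y) \<le> cmod (f x)"
    using continuous_attains_sup[OF _ ne c] by auto
  have "MM f r \<le> cmod (f x)" unfolding MM_def
    by (rule cSup_least) (use ne x in auto)
  moreover have "cmod (f x) \<le> MM f r" using MM_ge[OF f] x by auto
  ultimately show ?thesis using x by (intro exI[of _ x]) auto
qed

lemma MM_cball:
  assumes f: "f holomorphic_on UNIV" and r: "r > 0" and z: "cmod z \<le> r"
  shows "cmod (f z) \<le> MM f r"
proof (rule maximum_modulus_frontier[of f "cball 0 r"])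
  show "f holomorphic_on interior (cball 0 r)" using f by (auto intro: holomorphic_on_subset)
  show "continuous_on (closure (cball 0 r)) f"
    using f holomorphic_on_imp_continuous_on by (auto intro: continuous_on_subset)
  show "bounded (cball (0::complex) r)" by simp
  show "\<And>z. z \<in> frontier (cball 0 r) \<Longrightarrow> cmod (f z) \<le> MM f r"
    using MM_ge[OF f] by auto
  show "z \<in> cball 0 r" using z by simp
qed

lemma MM_mono:
  assumes f: "f holomorphic_on UNIV" and r: "0 \<le> r1" "r1 \<le> r2" "0 < r2"
  shows "MM f r1 \<le> MM f r2"
proof -
  obtain z where "cmod z = r1" "cmod (f z) = MM f r1" using MM_attained[OF f r(1)] by blast
  then show ?thesis using MM_cball[OF f r(3), of z] r by auto
qed

lemma MM_nonneg:
  assumes f: "f holomorphic_on UNIV" and r: "r \<ge> 0"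
  shows "MM f r \<ge> 0"
  using MM_attained[OF f r] by (metis norm_ge_zero)

lemma poly_of_derivs:
  assumes f: "f holomorphic_on UNIV" and d: "\<And>k. k > n \<Longrightarrow> (deriv ^^ k) f 0 = 0"
  shows "\<exists>p. \<forall>z. f z = poly p z"
proof -
  define c where "c k = (deriv ^^ k) f 0 / fact k" for k
  have ex: "\<exists>p. \<forall>z. poly p z = (\<Sum>k\<le>m. c k * z ^ k)" for m
  proof (induction m)
    case 0 then show ?case by (intro exI[of _ "[:c 0:]"]) auto
  next
    case (Suc m)
    then obtain p where p: "\<forall>z. poly p z = (\<Sum>k\<le>m. c k * z ^ k)" by blast
    show ?case
      by (intro exI[of _ "p + monom (c (Suc m)) (Suc m)"]) (simp add: p poly_monom)
  qed
  have "f z = (\<Sum>k\<le>n. c k * z ^ k)" for z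
  proof -
    have "((\<lambda>k. (deriv ^^ k) f 0 / (fact k) * (z - 0)^k) sums f z)"
      by (rule holomorphic_power_series[where r = "norm z + 1"]) (use f in \<open>auto intro: holomorphic_on_subset\<close>)
    then have s1: "(\<lambda>k. c k * z ^ k) sums f z" by (simp add: c_def)
    have s2: "(\<lambda>k. c k * z ^ k) sums (\<Sum>k\<in>{..n}. c k * z ^ k)"
      by (rule sums_finite) (auto simp: c_def d)
    show ?thesis using sums_unique2[OF s1 s2] by simp
  qed
  then show ?thesis using ex[of n] by metis
qed

lemma poly_of_growth:
  assumes f: "f holomorphic_on UNIV"
    and g: "\<And>S. \<exists>r. r \<ge> S \<and> r > 0 \<and> MM f r \<le> C * r ^ n"
  shows "\<exists>p. \<forall>z. f z = poly p z"
proof (rule poly_of_derivs[OF f])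
  fix k assume k: "k > n"
  show "(deriv ^^ k) f 0 = 0"
  proof (rule ccontr)
    assume nz: "(deriv ^^ k) f 0 \<noteq> 0"
    define a where "a = cmod ((deriv ^^ k) f 0)"
    have a: "a > 0" using nz by (simp add: a_def)
    obtain r where r: "r \<ge> max 1 (fact k * \<bar>C\<bar> / a + 1)" "r > 0" "MM f r \<le> C * r ^ n"
      using g by blast
    have "a \<le> fact k * (C * r ^ n) / r ^ k" unfolding a_def
    proof (rule Cauchy_inequality)
      show "f holomorphic_on ball 0 r" using f by (auto intro: holomorphic_on_subset)
      show "continuous_on (cball 0 r) f" using f holomorphic_on_imp_continuous_on by (auto intro: continuous_on_subset)
      show "cmod (f x) \<le> C * r ^ n" if "cmod (0 - x) = r" for x
        using MM_ge[OF f, of x r] r that by simp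
    qed (use r in auto)
    also have "\<dots> = fact k * C / r ^ (k - n)"
      using k r by (simp add: field_simps flip: power_add)
    also have "\<dots> \<le> fact k * \<bar>C\<bar> / r"
    proof -
      have "r \<le> r ^ (k - n)" using r k by (intro self_le_power) auto
      moreover have "fact k * C \<le> fact k * \<bar>C\<bar>" by (intro mult_left_mono) auto
      ultimately show ?thesis using r
        by (smt (verit) divide_le_cancel frac_le fact_gt_zero mult_nonneg_nonneg abs_ge_zero)
    qed
    finally have "a * r \<le> fact k * \<bar>C\<bar>" using r by (simp add: field_simps)
    moreover have "a * r \<ge> a * (fact k * \<bar>C\<bar> / a + 1)" using r a by (intro mult_left_mono) auto
    moreover have "a * (fact k * \<bar>C\<bar> / a + 1) = fact k * \<bar>C\<bar> + a" using a by (simp add: field_simps)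
    ultimately show False using a by linarith
  qed
qed

lemma zero_ball_poly:
  assumes f: "f holomorphic_on UNIV" and r: "r > 0" and z: "\<And>z. cmod z < r \<Longrightarrow> f z = 0"
  shows "\<exists>p. \<forall>z. f z = poly p z"
proof (rule poly_of_derivs[OF f, of 0])
  fix k :: nat assume k: "k > 0"
  have "(deriv ^^ k) f 0 = (deriv ^^ k) (\<lambda>w. 0) 0"
    by (rule higher_deriv_transform_within_open[of _ "ball 0 r"]) (use f r z in \<open>auto intro: holomorphic_on_subset\<close>)
  then show "(deriv ^^ k) f 0 = 0" using k by simp
qed

lemma MM_pos:
  assumes f: "f holomorphic_on UNIV" and np: "\<not> (\<exists>p. \<forall>z. f z = poly p z)" and r: "r > 0"
  shows "MM f r > 0"
proof (rule ccontr)
  assume "\<not> MM f r > 0"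
  then have "MM f r \<le> 0" by simp
  then have "\<And>z. cmod z < r \<Longrightarrow> f z = 0" using MM_cball[OF f r] by (smt (verit) norm_le_zero_iff)
  then show False using zero_ball_poly[OF f r] np by blast
qed



lemma three_circles_int:
  assumes f: "f holomorphic_on UNIV" and r: "0 < r1" "r1 < r" "r < r2"
  shows "MM f r ^ q / r ^ p \<le> max (MM f r1 ^ q / r1 ^ p) (MM f r2 ^ q / r2 ^ p)"
proof -
  define S where "S = {z::complex. r1 \<le> cmod z \<and> cmod z \<le> r2}"
  define h where "h w = f w ^ q / w ^ p" for w
  have hol: "h holomorphic_on (- {0})" unfolding h_def
    using f by (intro holomorphic_intros) (auto intro: holomorphic_on_subset)
  have S0: "S \<subseteq> - {0}" using r by (auto simp: S_def)
  have clS: "closed S" unfolding S_def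
    by (intro closed_Collect_conj closed_Collect_le continuous_intros)
  have opT: "open {z::complex. r1 < cmod z \<and> cmod z < r2}"
    by (intro open_Collect_conj open_Collect_less continuous_intros)
  have intS: "{z::complex. r1 < cmod z \<and> cmod z < r2} \<subseteq> interior S"
    by (rule interior_maximal) (use opT in \<open>auto simp: S_def\<close>)
  have "0 \<le> r" using r by simp
  then obtain \<xi> where xi: "cmod \<xi> = r" "cmod (f \<xi>) = MM f r" using MM_attained[OF f] by blast
  have "cmod (h \<xi>) \<le> max (MM f r1 ^ q / r1 ^ p) (MM f r2 ^ q / r2 ^ p)"
  proof (rule maximum_modulus_frontier[of h S])
    show "h holomorphic_on interior S"
      using hol S0 interior_subset by (blast intro: holomorphic_on_subset)
    show "continuous_on (closure S) h"
      using holomorphic_on_imp_continuous_on[OF hol] S0 clS by (auto intro: continuous_on_subset)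
    show "bounded S" unfolding S_def bounded_iff by auto
    show "\<xi> \<in> S" using xi r by (auto simp: S_def)
    fix z assume z: "z \<in> frontier S"
    then have zS: "z \<in> S" using clS by (simp add: frontier_def)
    have "z \<notin> interior S" using z by (simp add: frontier_def)
    then have "z \<notin> {z::complex. r1 < cmod z \<and> cmod z < r2}" using intS by blast
    then have zz: "cmod z = r1 \<or> cmod z = r2" using zS by (auto simp: S_def)
    have hz: "cmod (h z) = cmod (f z) ^ q / cmod z ^ p" by (simp add: h_def norm_divide norm_power)
    show "cmod (h z) \<le> max (MM f r1 ^ q / r1 ^ p) (MM f r2 ^ q / r2 ^ p)"
      using zz
    proof
      assume "cmod z = r1"
      then have "cmod (f z) ^ q \<le> MM f r1 ^ q" using MM_ge[OF f] by (intro power_mono) auto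
      then have "cmod (h z) \<le> MM f r1 ^ q / r1 ^ p" using hz \<open>cmod z = r1\<close> r
        by (simp add: divide_right_mono)
      then show ?thesis by linarith
    next
      assume "cmod z = r2"
      then have "cmod (f z) ^ q \<le> MM f r2 ^ q" using MM_ge[OF f] by (intro power_mono) auto
      then have "cmod (h z) \<le> MM f r2 ^ q / r2 ^ p" using hz \<open>cmod z = r2\<close> r
        by (simp add: divide_right_mono)
      then show ?thesis by linarith
    qed
  qed
  moreover have "cmod (h \<xi>) = MM f r ^ q / r ^ p" using xi by (simp add: h_def norm_divide norm_power)
  ultimately show ?thesis by simp
qed

definition Phi :: "(complex \<Rightarrow> complex) \<Rightarrow> real \<Rightarrow> real" where
  "Phi f s = ln (MM f (exp s))"

lemma Phi_mono:
  assumes f: "f holomorphic_on UNIV" and np: "\<not> (\<exists>p. \<forall>z. f z = poly p z)"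
  shows "mono (Phi f)"
proof
  fix x y :: real assume "x \<le> y"
  then show "Phi f x \<le> Phi f y" unfolding Phi_def
    using MM_mono[OF f, of "exp x" "exp y"] MM_pos[OF f np] by simp
qed

lemma le_eps_nat:
  fixes x y K :: real
  assumes "\<And>q::nat. (1::nat) \<le> q \<Longrightarrow> x \<le> y + K / real q"
  shows "x \<le> y"
proof (rule ccontr)
  assume "\<not> x \<le> y"
  then have d: "x - y > 0" by simp
  define q where "q = nat \<lceil>\<bar>K\<bar> / (x - y)\<rceil> + 1"
  have q1: "q \<ge> 1" by (simp add: q_def)
  have "\<bar>K\<bar> / (x - y) < q" unfolding q_def by linarith
  then have "\<bar>K\<bar> < q * (x - y)" using d by (simp add: field_simps)
  then have "K / q < x - y" using q1 by (simp add: field_simps)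
  with assms[OF q1] show False by simp
qed

lemma Phi_three:
  assumes f: "f holomorphic_on UNIV" and np: "\<not> (\<exists>p. \<forall>z. f z = poly p z)"
    and s: "s1 < s" "s < s2"
  shows "(s2 - s1) * Phi f s \<le> (s2 - s) * Phi f s1 + (s - s1) * Phi f s2"
proof -
  define m where "m = (Phi f s2 - Phi f s1) / (s2 - s1)"
  have m0: "m \<ge> 0" using Phi_mono[OF f np] s unfolding m_def
    by (simp add: monoD)
  define K where "K = \<bar>s\<bar> + \<bar>s1\<bar> + \<bar>s2\<bar>"
  have pos: "MM f (exp t) > 0" for t using MM_pos[OF f np] by simp
  have key: "Phi f s - m * s \<le> max (Phi f s1 - m * s1) (Phi f s2 - m * s2)"
  proof (rule le_eps_nat[where K = K])
    fix q :: nat assume q: "(1::nat) \<le> q"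
    define p where "p = nat \<lfloor>m * q\<rfloor>"
    have mq: "0 \<le> m * q" using m0 by simp
    have pe: "real p = of_int \<lfloor>m * q\<rfloor>" using mq by (simp add: p_def)
    have p1: "real p \<le> m * q" "m * q < real p + 1" unfolding pe by linarith+
    define m' where "m' = real p / q"
    have qp: "real q > 0" using q by simp
    have mm1: "m' \<le> m" unfolding m'_def using p1 qp by (simp add: field_simps)
    have "m * q - p < 1" using p1 by simp
    then have "(m * q - p) / q < 1 / q" using qp by (simp add: divide_strict_right_mono)
    then have mm2: "m - m' < 1 / q" unfolding m'_def using qp by (simp add: diff_divide_distrib)
    note mm = mm1 mm2
    have "MM f (exp s) ^ q / (exp s) ^ p \<le> max (MM f (exp s1) ^ q / (exp s1) ^ p) (MM f (exp s2) ^ q / (exp s2) ^ p)"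
      by (rule three_circles_int[OF f]) (use s in auto)
    then have "ln (MM f (exp s) ^ q / (exp s) ^ p) \<le> ln (max (MM f (exp s1) ^ q / (exp s1) ^ p) (MM f (exp s2) ^ q / (exp s2) ^ p))"
    proof (subst ln_le_cancel_iff)
      have "0 < MM f (exp s1) ^ q / exp s1 ^ p" using pos by simp
      then show "0 < max (MM f (exp s1) ^ q / exp s1 ^ p) (MM f (exp s2) ^ q / exp s2 ^ p)" by linarith
    qed (use pos in auto)
    also have "\<dots> = max (ln (MM f (exp s1) ^ q / (exp s1) ^ p)) (ln (MM f (exp s2) ^ q / (exp s2) ^ p))"
      using pos by (simp add: max_def)
    also have lnq: "ln (MM f (exp t) ^ q / (exp t) ^ p) = q * Phi f t - p * t" for t :: real
    proof -
      have "ln (MM f (exp t) ^ q / (exp t) ^ p) = ln (MM f (exp t) ^ q) - ln ((exp t) ^ p)"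
        using pos[of t] by (intro ln_divide_pos) auto
      also have "\<dots> = q * Phi f t - p * t"
        using pos[of t] by (simp add: Phi_def ln_realpow)
      finally show ?thesis .
    qed
    finally have "q * Phi f s - p * s \<le> max (q * Phi f s1 - p * s1) (q * Phi f s2 - p * s2)"
      by (simp only: lnq)
    then have "(q * Phi f s - p * s) / q \<le> max (q * Phi f s1 - p * s1) (q * Phi f s2 - p * s2) / q"
      using q by (intro divide_right_mono) auto
    then have A: "Phi f s - m' * s \<le> max (Phi f s1 - m' * s1) (Phi f s2 - m' * s2)"
      using q by (simp add: m'_def field_simps max_divide_distrib_right)
    have e: "\<bar>(m - m') * t\<bar> \<le> \<bar>t\<bar> / q" for t
    proof -
      have "\<bar>(m - m') * t\<bar> = (m - m') * \<bar>t\<bar>" using mm by (simp add: abs_mult)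
      also have "\<dots> \<le> (1 / q) * \<bar>t\<bar>" using mm by (intro mult_right_mono) auto
      finally show ?thesis by simp
    qed
    have e1: "\<bar>(m - m') * s\<bar> \<le> \<bar>s\<bar> / q" "\<bar>(m - m') * s1\<bar> \<le> \<bar>s1\<bar> / q" "\<bar>(m - m') * s2\<bar> \<le> \<bar>s2\<bar> / q"
      using e by auto
    have "K / q = \<bar>s\<bar>/q + \<bar>s1\<bar>/q + \<bar>s2\<bar>/q" by (simp add: K_def add_divide_distrib)
    then show "Phi f s - m * s \<le> max (Phi f s1 - m * s1) (Phi f s2 - m * s2) + K / q"
      using A e1 by (auto simp: algebra_simps abs_le_iff max_def split: if_splits)
  qed
  have eq: "Phi f s1 - m * s1 = Phi f s2 - m * s2" using s unfolding m_def by (simp add: field_simps)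
  have "Phi f s \<le> Phi f s1 + m * (s - s1)" using key eq by (simp add: algebra_simps)
  then have "(s2 - s1) * Phi f s \<le> (s2 - s1) * (Phi f s1 + m * (s - s1))" using s by (intro mult_left_mono) auto
  also have "\<dots> = (s2 - s) * Phi f s1 + (s - s1) * Phi f s2" using s unfolding m_def by (simp add: field_simps)
  finally show ?thesis .
qed

lemma Phi_convex:
  assumes f: "f holomorphic_on UNIV" and np: "\<not> (\<exists>p. \<forall>z. f z = poly p z)"
  shows "convex_on UNIV (Phi f)"
proof (rule convex_onI)
  fix t x y :: real assume t: "0 < t" "t < 1"
  show "Phi f ((1 - t) *\<^sub>R x + t *\<^sub>R y) \<le> (1 - t) * Phi f x + t * Phi f y"
  proof (cases x y rule: linorder_cases)
    case less
    have "(y - x) * Phi f ((1 - t) * x + t * y) \<le> (y - ((1 - t) * x + t * y)) * Phi f x + (((1 - t) * x + t * y) - x) * Phi f y"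
    proof (rule Phi_three[OF f np])
      have "0 < t * (y - x)" "0 < (1 - t) * (y - x)" using less t by simp_all
      then show "x < (1 - t) * x + t * y" "(1 - t) * x + t * y < y" by (simp_all add: algebra_simps)
    qed
    also have "\<dots> = (y - x) * ((1 - t) * Phi f x + t * Phi f y)" by (simp add: algebra_simps)
    finally show ?thesis using less by simp
  next
    case equal then show ?thesis by (simp add: algebra_simps)
  next
    case greater
    have "(x - y) * Phi f ((1 - t) * x + t * y) \<le> (x - ((1 - t) * x + t * y)) * Phi f y + (((1 - t) * x + t * y) - y) * Phi f x"
    proof (rule Phi_three[OF f np])
      have "0 < t * (x - y)" "0 < (1 - t) * (x - y)" using greater t by simp_all
      then show "y < (1 - t) * x + t * y" "(1 - t) * x + t * y < x" by (simp_all add: algebra_simps)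
    qed
    also have "\<dots> = (x - y) * ((1 - t) * Phi f x + t * Phi f y)" by (simp add: algebra_simps)
    finally show ?thesis using greater by simp
  qed
qed simp



lemma convex_chord:
  fixes \<Phi> :: "real \<Rightarrow> real"
  assumes cv: "convex_on UNIV \<Phi>" and ab: "a < b" "a \<le> x" "x \<le> b"
  shows "\<Phi> x \<le> \<Phi> a + (\<Phi> b - \<Phi> a) * (x - a) / (b - a)"
proof -
  define t where "t = (x - a) / (b - a)"
  have t: "0 \<le> t" "t \<le> 1" using ab by (auto simp: t_def field_simps)
  have e: "t * (b - a) = x - a" using ab by (simp add: t_def)
  have "(1 - t) * a + t * b = a + t * (b - a)" by (simp add: algebra_simps)
  then have x: "x = (1 - t) *\<^sub>R a + t *\<^sub>R b" using e by simp
  have "\<Phi> x \<le> (1 - t) * \<Phi> a + t * \<Phi> b"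
    unfolding x by (rule convex_onD[OF cv]) (use t in auto)
  also have "\<dots> = \<Phi> a + t * (\<Phi> b - \<Phi> a)" by (simp add: algebra_simps)
  also have "t * (\<Phi> b - \<Phi> a) = (\<Phi> b - \<Phi> a) * (x - a) / (b - a)"
    unfolding t_def by (metis mult.commute times_divide_eq_left)
  finally show ?thesis .
qed

lemma selection:
  fixes \<Phi> :: "real \<Rightarrow> real" and R q S :: real
  assumes cv: "convex_on UNIV \<Phi>" and mo: "mono \<Phi>" and R: "R \<ge> 2" and q: "1 < q"
    and unb: "\<And>y. \<exists>s. \<Phi> s \<ge> y"
    and nopoly: "\<And>C. \<exists>S. \<forall>s\<ge>S. \<Phi> s > C + R * s"
  shows "\<exists>s0 g. s0 \<ge> S \<and> 0 < g \<and> g \<le> 1 \<and> 0 \<le> \<Phi> s0 \<and> R / g \<le> R * exp (\<Phi> s0 / 2)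
     \<and> (\<forall>t. -g \<le> t \<and> t \<le> 0 \<longrightarrow> \<Phi> (s0 + t) \<le> \<Phi> s0 + (R / g) * t)
     \<and> (\<forall>t. 0 \<le> t \<and> t \<le> g / q \<longrightarrow> \<Phi> (s0 + t) \<le> \<Phi> s0 + q * (R / g) * t)"
proof -
  have cont: "continuous_on UNIV \<Phi>" using convex_on_continuous[OF _ cv] by simp
  define y0 where "y0 = max 0 (\<Phi> 0) + 1"
  have y0: "y0 \<ge> 1" "\<Phi> 0 < y0" by (auto simp: y0_def)
  have ex: "\<exists>s. \<Phi> s = y0 + real k * R" for k :: nat
  proof -
    obtain s' where s': "\<Phi> s' \<ge> y0 + real k * R" using unb by blast
    have "real k * R \<ge> 0" using R by simp
    then have lt: "\<Phi> 0 \<le> y0 + real k * R" using y0 by linarith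
    have "0 \<le> s'"
    proof (rule ccontr)
      assume "\<not> 0 \<le> s'"
      then have "\<Phi> s' \<le> \<Phi> 0" using mo by (simp add: monoD)
      moreover have "real k * R \<ge> 0" using R by simp
      ultimately show False using s' y0 by linarith
    qed
    moreover have "continuous_on {0..s'} \<Phi>" using cont by (rule continuous_on_subset) simp
    ultimately show ?thesis using IVT'[of \<Phi> 0 "y0 + real k * R" s'] lt s' by blast
  qed
  define sk where "sk k = (SOME s. \<Phi> s = y0 + real k * R)" for k :: nat
  have Psk: "\<Phi> (sk k) = y0 + real k * R" for k unfolding sk_def using someI_ex[OF ex] by blast
  have sk_less: "sk k < sk (Suc k)" for k
  proof (rule ccontr)
    assume "\<not> sk k < sk (Suc k)"
    then have "\<Phi> (sk (Suc k)) \<le> \<Phi> (sk k)" using mo by (simp add: monoD)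
    then show False using Psk[of k] Psk[of "Suc k"] R by (simp add: algebra_simps)
  qed
  have sk_mono: "m \<le> n \<Longrightarrow> sk m \<le> sk n" for m n
  proof -
    have "sk i \<le> sk (Suc i)" for i using sk_less[of i] by simp
    then show "m \<le> n \<Longrightarrow> sk m \<le> sk n" by (rule lift_Suc_mono_le)
  qed
  define g where "g k = sk (Suc k) - sk k" for k
  have gpos: "g k > 0" for k using sk_less[of k] by (simp add: g_def)
  have gdec: "g (Suc k) \<le> g k" for k
  proof -
    have "\<Phi> (sk (Suc k)) \<le> \<Phi> (sk k) + (\<Phi> (sk (Suc (Suc k))) - \<Phi> (sk k)) * (sk (Suc k) - sk k) / (sk (Suc (Suc k)) - sk k)"
      by (rule convex_chord[OF cv]) (use sk_less[of k] sk_less[of "Suc k"] in auto)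
    moreover have "sk (Suc (Suc k)) - sk k = g k + g (Suc k)" "sk (Suc k) - sk k = g k"
      by (simp_all add: g_def)
    moreover have "\<Phi> (sk (Suc (Suc k))) - \<Phi> (sk k) = 2 * R" "\<Phi> (sk (Suc k)) = \<Phi> (sk k) + R"
      by (simp_all add: Psk algebra_simps)
    ultimately have "R \<le> 2 * R * g k / (g k + g (Suc k))" by simp
    moreover have gg: "g k + g (Suc k) > 0" using gpos[of k] gpos[of "Suc k"] by simp
    ultimately have "R * (g k + g (Suc k)) \<le> 2 * R * g k"
      by (simp add: le_divide_eq)
    then have "R * g (Suc k) \<le> R * g k" by (simp add: algebra_simps)
    then show ?thesis using R by simp
  qed
  have ganti: "m \<le> n \<Longrightarrow> g n \<le> g m" for m n
  proof (induction n rule: dec_induct)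
    case base then show ?case by simp
  next
    case (step n) then show ?case using gdec[of n] by linarith
  qed
  have sk_unb: "\<exists>k. sk k > B" for B
  proof (rule ccontr)
    assume "\<not> (\<exists>k. sk k > B)"
    then have "\<Phi> (sk k) \<le> \<Phi> B" for k using mo by (simp add: monoD not_less)
    then have *: "y0 + real k * R \<le> \<Phi> B" for k using Psk by simp
    define k where "k = nat \<lceil>\<Phi> B / R\<rceil> + 1"
    have "\<Phi> B / R < real k" unfolding k_def by linarith
    then have "\<Phi> B < real k * R" using R by (simp add: field_simps)
    then show False using *[of k] y0 by simp
  qed
  have sk_sum: "sk (k1 + m) = sk k1 + (\<Sum>j<m. g (k1 + j))" for k1 m
    by (induction m) (auto simp: g_def)
  obtain K1 where K1: "sk K1 > S" using sk_unb by blast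
  have good: "\<exists>k\<ge>K1. g k \<le> 1 \<and> g k / q \<le> g (Suc k) \<and> (1/2) ^ k \<le> g k"
  proof (rule ccontr)
    assume H: "\<not> (\<exists>k\<ge>K1. g k \<le> 1 \<and> g k / q \<le> g (Suc k) \<and> (1/2) ^ k \<le> g k)"
    show False
    proof (cases "\<exists>k1\<ge>K1. g k1 \<le> 1")
      case True
      then obtain k1 where k1: "k1 \<ge> K1" "g k1 \<le> 1" by blast
      define \<mu> where "\<mu> = max (1 / q) (1 / 2 :: real)"
      have mu: "0 < \<mu>" "\<mu> < 1" "1 / q \<le> \<mu>" "1 / 2 \<le> \<mu>" using q by (auto simp: \<mu>_def)
      define E where "E = max (1 / \<mu>) (g k1 / \<mu> ^ k1)"
      have E: "1 \<le> E * \<mu>" "g k1 \<le> E * \<mu> ^ k1" "0 \<le> E"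
        using mu gpos[of k1] by (auto simp: E_def field_simps max_def)
      have bnd: "g (k1 + m) \<le> E * \<mu> ^ (k1 + m)" for m
      proof (induction m)
        case 0 then show ?case using E by simp
      next
        case (Suc m)
        define k where "k = k1 + m"
        have kK: "k \<ge> K1" using k1 by (simp add: k_def)
        have gk1: "g k \<le> 1" using ganti[of k1 k] k1 by (simp add: k_def)
        have IH: "g k \<le> E * \<mu> ^ k" using Suc by (simp add: k_def)
        have "\<not> (g k \<le> 1 \<and> g k / q \<le> g (Suc k) \<and> (1/2) ^ k \<le> g k)" using H kK by blast
        then have "g (Suc k) < g k / q \<or> g k < (1/2) ^ k" using gk1 by linarith
        then have "g (Suc k) \<le> E * \<mu> ^ Suc k"
        proof
          assume a: "g (Suc k) < g k / q"
          have "g k / q \<le> (E * \<mu> ^ k) / q" using IH q by (intro divide_right_mono) auto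
          also have "\<dots> = (E * \<mu> ^ k) * (1 / q)" by simp
          also have "\<dots> \<le> (E * \<mu> ^ k) * \<mu>" using mu E by (intro mult_left_mono) auto
          finally show ?thesis using a by (simp add: algebra_simps)
        next
          assume a: "g k < (1/2) ^ k"
          have "(1/2::real) ^ k \<le> \<mu> ^ k" using mu by (intro power_mono) auto
          also have "\<dots> \<le> (E * \<mu>) * \<mu> ^ k" using E mu by simp
          finally show ?thesis using a gdec[of k] by (simp add: algebra_simps)
        qed
        then show ?case by (simp add: k_def)
      qed
      have sb: "sk (k1 + m) \<le> sk k1 + E / (1 - \<mu>)" for m
      proof -
        have "(\<Sum>j<m. g (k1 + j)) \<le> (\<Sum>j<m. E * \<mu> ^ j)"
        proof (rule sum_mono)
          fix j assume "j \<in> {..<m}"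
          have "\<mu> ^ (k1 + j) \<le> \<mu> ^ j" using mu by (intro power_decreasing) auto
          then have "E * \<mu> ^ (k1 + j) \<le> E * \<mu> ^ j" using E by (intro mult_left_mono) auto
          then show "g (k1 + j) \<le> E * \<mu> ^ j" using bnd[of j] by linarith
        qed
        also have "\<dots> = E * (\<Sum>j<m. \<mu> ^ j)" by (simp add: sum_distrib_left)
        also have "(\<Sum>j<m. \<mu> ^ j) = (1 - \<mu> ^ m) / (1 - \<mu>)" using mu by (simp add: sum_gp_strict)
        also have "E * ((1 - \<mu> ^ m) / (1 - \<mu>)) \<le> E * (1 / (1 - \<mu>))"
          using mu E by (intro mult_left_mono divide_right_mono) auto
        finally show ?thesis using sk_sum[of k1 m] by simp
      qed
      obtain k where k: "sk k > sk k1 + E / (1 - \<mu>)" using sk_unb by blast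
      show False
      proof (cases "k \<le> k1")
        case True
        then have "sk k \<le> sk k1" using sk_mono by blast
        moreover have "E / (1 - \<mu>) \<ge> 0" using E mu by simp
        ultimately show False using k by simp
      next
        case False
        then have "k = k1 + (k - k1)" by simp
        then show False using sb[of "k - k1"] k by simp
      qed
    next
      case False
      then have g1: "\<And>k. k \<ge> K1 \<Longrightarrow> g k > 1" by force
      have sgrow: "sk (K1 + m) \<ge> sk K1 + m" for m
      proof (induction m)
        case 0 then show ?case by simp
      next
        case (Suc m)
        have "g (K1 + m) > 1" using g1 by simp
        then show ?case using Suc by (simp add: g_def)
      qed
      define C where "C = y0 + real K1 * R - R * sk K1"
      obtain S' where S': "\<forall>s\<ge>S'. \<Phi> s > C + R * s" using nopoly by blast
      define m where "m = nat \<lceil>S' - sk K1\<rceil>"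
      have "S' - sk K1 \<le> real m" unfolding m_def by linarith
      then have sS: "sk (K1 + m) \<ge> S'" using sgrow[of m] by simp
      have "real m \<le> sk (K1 + m) - sk K1" using sgrow[of m] by simp
      then have "R * real m \<le> R * (sk (K1 + m) - sk K1)" using R by (intro mult_left_mono) auto
      then have "\<Phi> (sk (K1 + m)) \<le> C + R * sk (K1 + m)"
        using Psk[of "K1 + m"] by (simp add: C_def algebra_simps)
      then show False using S' sS by force
    qed
  qed
  then obtain k where k: "k \<ge> K1" "g k \<le> 1" "g k / q \<le> g (Suc k)" "(1/2) ^ k \<le> g k" by blast
  define s0 where "s0 = sk (Suc k)"
  have "s0 \<ge> S" using sk_mono[of K1 "Suc k"] k K1 by (simp add: s0_def)
  moreover have P0: "\<Phi> s0 = y0 + real (Suc k) * R" by (simp add: Psk s0_def)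
  moreover have "0 \<le> \<Phi> s0" using P0 y0 R by simp
  moreover have "R / g k \<le> R * exp (\<Phi> s0 / 2)"
  proof -
    have "1 / g k \<le> 2 ^ k"
      using k(4) gpos[of k] by (simp add: field_simps power_divide)
    also have "(2::real) ^ k \<le> exp 1 ^ k"
      using exp_ge_add_one_self[of 1] by (intro power_mono) auto
    also have "exp 1 ^ k = exp (real k)" by (simp add: exp_of_nat_mult[symmetric])
    also have "exp (real k) \<le> exp (\<Phi> s0 / 2)"
    proof -
      have "real (Suc k) * 2 \<le> real (Suc k) * R" using R by (intro mult_left_mono) auto
      then show ?thesis using P0 y0 by simp
    qed
    finally have "1 / g k \<le> exp (\<Phi> s0 / 2)" .
    then have "R * (1 / g k) \<le> R * exp (\<Phi> s0 / 2)" using R by (intro mult_left_mono) auto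
    then show ?thesis by simp
  qed
  moreover have "\<forall>t. -g k \<le> t \<and> t \<le> 0 \<longrightarrow> \<Phi> (s0 + t) \<le> \<Phi> s0 + (R / g k) * t"
  proof safe
    fix t assume t: "- g k \<le> t" "t \<le> 0"
    have "\<Phi> (s0 + t) \<le> \<Phi> (sk k) + (\<Phi> (sk (Suc k)) - \<Phi> (sk k)) * ((s0 + t) - sk k) / (sk (Suc k) - sk k)"
      by (rule convex_chord[OF cv]) (use t sk_less[of k] in \<open>auto simp: s0_def g_def\<close>)
    also have "\<dots> = \<Phi> s0 + (R / g k) * t"
    proof -
      have e1: "\<Phi> (sk (Suc k)) = \<Phi> s0" "\<Phi> (sk k) = \<Phi> s0 - R"
        by (simp_all add: Psk s0_def algebra_simps)
      have e2: "(s0 + t) - sk k = g k + t" "sk (Suc k) - sk k = g k" by (simp_all add: s0_def g_def)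
      have "R * (g k + t) / g k = R + (R / g k) * t" using gpos[of k] by (simp add: field_simps)
      then show ?thesis unfolding e1 e2 by simp
    qed
    finally show "\<Phi> (s0 + t) \<le> \<Phi> s0 + (R / g k) * t" .
  qed
  moreover have "\<forall>t. 0 \<le> t \<and> t \<le> g k / q \<longrightarrow> \<Phi> (s0 + t) \<le> \<Phi> s0 + q * (R / g k) * t"
  proof safe
    fix t assume t: "0 \<le> t" "t \<le> g k / q"
    have "\<Phi> (s0 + t) \<le> \<Phi> (sk (Suc k)) + (\<Phi> (sk (Suc (Suc k))) - \<Phi> (sk (Suc k))) * ((s0 + t) - sk (Suc k)) / (sk (Suc (Suc k)) - sk (Suc k))"
      by (rule convex_chord[OF cv]) (use t k(3) sk_less[of "Suc k"] in \<open>auto simp: s0_def g_def\<close>)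
    also have "\<dots> = \<Phi> s0 + R * t / g (Suc k)"
    proof -
      have e1: "\<Phi> (sk (Suc (Suc k))) = \<Phi> s0 + R" "\<Phi> (sk (Suc k)) = \<Phi> s0"
        by (simp_all add: Psk s0_def algebra_simps)
      have e2: "(s0 + t) - sk (Suc k) = t" "sk (Suc (Suc k)) - sk (Suc k) = g (Suc k)" by (simp_all add: s0_def g_def)
      show ?thesis unfolding e1 e2 by simp
    qed
    also have "R * t / g (Suc k) \<le> q * (R / g k) * t"
    proof -
      have "1 / g (Suc k) \<le> q / g k" using k(3) gpos[of k] gpos[of "Suc k"] q
        by (simp add: field_simps)
      then have "(R * t) * (1 / g (Suc k)) \<le> (R * t) * (q / g k)" using R t by (intro mult_left_mono) auto
      then show ?thesis by (simp add: ac_simps)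
    qed
    finally show "\<Phi> (s0 + t) \<le> \<Phi> s0 + q * (R / g k) * t" by simp
  qed
  ultimately show ?thesis using gpos[of k] k(2) by blast
qed



lemma hd_pow: "(deriv ^^ j) (\<lambda>w. w ^ N) w = pochhammer (of_nat (Suc N - j)) j * (w::complex) ^ (N - j)"
  using higher_deriv_power[of j 0 N w] by simp

lemma deriv_formulas:
  fixes f :: "complex \<Rightarrow> complex" and m :: nat
  assumes f: "f holomorphic_on UNIV" and z0: "z0 \<noteq> 0"
  defines "H \<equiv> \<lambda>w. f w / w ^ (m + 3)"
  shows "(deriv ^^ 1) f z0 = of_nat (m+3) * z0 ^ (m+2) * H z0 + z0 ^ (m+3) * (deriv ^^ 1) H z0"
    and "(deriv ^^ 2) f z0 = of_nat (m+3) * of_nat (m+2) * z0 ^ (m+1) * H z0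
           + 2 * of_nat (m+3) * z0 ^ (m+2) * (deriv ^^ 1) H z0 + z0 ^ (m+3) * (deriv ^^ 2) H z0"
    and "(deriv ^^ 3) f z0 = of_nat (m+3) * of_nat (m+2) * of_nat (m+1) * z0 ^ m * H z0
           + 3 * of_nat (m+3) * of_nat (m+2) * z0 ^ (m+1) * (deriv ^^ 1) H z0
           + 3 * of_nat (m+3) * z0 ^ (m+2) * (deriv ^^ 2) H z0 + z0 ^ (m+3) * (deriv ^^ 3) H z0"
proof -
  define N where "N = m + 3"
  have holH: "H holomorphic_on (- {0})" unfolding H_def
    using f by (intro holomorphic_intros) (auto intro: holomorphic_on_subset)
  have holP: "(\<lambda>w. w ^ N) holomorphic_on (- {0})" by (intro holomorphic_intros)
  have holf: "f holomorphic_on (- {0})" using f by (auto intro: holomorphic_on_subset)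
  have holPH: "(\<lambda>w. w ^ N * H w) holomorphic_on (- {0})" using holH holP by (intro holomorphic_intros)
  have op: "open (- {0::complex})" by auto
  have eq: "(deriv ^^ n) f z0 = (\<Sum>i = 0..n. of_nat (n choose i) * (deriv ^^ i) (\<lambda>w. w ^ N) z0 * (deriv ^^ (n-i)) H z0)" for n
  proof -
    have "(deriv ^^ n) f z0 = (deriv ^^ n) (\<lambda>w. w ^ N * H w) z0"
      by (rule higher_deriv_transform_within_open[OF holf holPH op]) (use z0 in \<open>auto simp: H_def N_def\<close>)
    also have "\<dots> = (\<Sum>i = 0..n. of_nat (n choose i) * (deriv ^^ i) (\<lambda>w. w ^ N) z0 * (deriv ^^ (n-i)) H z0)"
      by (rule higher_deriv_mult[OF holP holH op]) (use z0 in auto)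
    finally show ?thesis .
  qed
  show "(deriv ^^ 1) f z0 = of_nat (m+3) * z0 ^ (m+2) * H z0 + z0 ^ (m+3) * (deriv ^^ 1) H z0"
    unfolding eq by (simp add: hd_pow N_def)
  show "(deriv ^^ 2) f z0 = of_nat (m+3) * of_nat (m+2) * z0 ^ (m+1) * H z0
           + 2 * of_nat (m+3) * z0 ^ (m+2) * (deriv ^^ 1) H z0 + z0 ^ (m+3) * (deriv ^^ 2) H z0"
    unfolding eq by (simp add: hd_pow N_def numeral_2_eq_2 pochhammer_Suc algebra_simps)
  show "(deriv ^^ 3) f z0 = of_nat (m+3) * of_nat (m+2) * of_nat (m+1) * z0 ^ m * H z0
           + 3 * of_nat (m+3) * of_nat (m+2) * z0 ^ (m+1) * (deriv ^^ 1) H z0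
           + 3 * of_nat (m+3) * z0 ^ (m+2) * (deriv ^^ 2) H z0 + z0 ^ (m+3) * (deriv ^^ 3) H z0"
  proof -
    have sum3: "(\<Sum>i = 0..3. F i) = F 0 + F 1 + F 2 + F (3::nat)" for F :: "nat \<Rightarrow> complex"
      by (simp add: numeral_3_eq_3 numeral_2_eq_2 sum.atLeast0_atMost_Suc)
    have c: "(3::nat) choose 1 = 3" "(3::nat) choose 2 = 3" "(3::nat) choose 3 = 1" "(3::nat) choose 0 = 1"
      by (simp_all add: numeral_3_eq_3 numeral_2_eq_2)
    have p: "(deriv ^^ 0) (\<lambda>w. w ^ N) z0 = z0 ^ (m+3)"
      "(deriv ^^ 1) (\<lambda>w. w ^ N) z0 = of_nat (m+3) * z0 ^ (m+2)"
      "(deriv ^^ 2) (\<lambda>w. w ^ N) z0 = of_nat (m+3) * of_nat (m+2) * z0 ^ (m+1)"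
      "(deriv ^^ 3) (\<lambda>w. w ^ N) z0 = of_nat (m+3) * of_nat (m+2) * of_nat (m+1) * z0 ^ m"
      unfolding hd_pow by (simp_all add: N_def numeral_3_eq_3 numeral_2_eq_2 pochhammer_Suc algebra_simps)
    show ?thesis unfolding eq sum3 c p by (simp add: algebra_simps)
  qed
qed



lemma norm3: "cmod (a + b + c) \<le> cmod a + cmod b + cmod c"
  by (meson add_mono norm_triangle_ineq order_trans order_refl)
lemma norm4: "cmod (a + b + c + d) \<le> cmod a + cmod b + cmod c + cmod d"
  by (meson add_mono norm_triangle_ineq order_trans order_refl)
lemma norm5: "cmod (a + b + c + d + e) \<le> cmod a + cmod b + cmod c + cmod d + cmod e"
  by (meson add_mono norm_triangle_ineq order_trans order_refl)

lemma core_alg: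
  fixes A B \<alpha> \<beta> \<gamma> \<delta> n \<epsilon> r Mr a1 a2 a3 :: real and e1 e2 e3 f0 z0 :: complex
  assumes AB: "A + B \<noteq> 0"
    and eps: "0 < \<epsilon>" "\<epsilon> \<le> 1/100" "\<epsilon> \<le> \<bar>A + B\<bar> / (52 * (\<bar>A\<bar> + \<bar>B\<bar> + 1))"
    and n: "1 \<le> n * \<epsilon>"
    and e: "cmod e1 \<le> 6 * n * \<epsilon>" "cmod e2 \<le> 24 * n^2 * \<epsilon>^2" "cmod e3 \<le> 144 * n^3 * \<epsilon>^3"
    and z0: "cmod z0 = r" and r: "r \<ge> 1" and f0: "cmod f0 = Mr" and Mr: "Mr \<ge> 1"
    and X1: "X1 = of_real n + e1"
    and X2: "X2 = of_real (n * (n - 1)) + 2 * of_real n * e1 + e2"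
    and X3: "X3 = of_real (n * (n - 1) * (n - 2)) + 3 * of_real (n * (n - 1)) * e1 + 3 * of_real n * e2 + e3"
    and iden: "f0 * z0 * (of_real B * X2 + of_real A * X1^2)
               = X3 + of_real \<alpha> * z0 * X2 + of_real \<beta> * z0^2 * X1 + of_real \<gamma> * z0^3 + of_real \<delta> * z0^3 / f0"
  shows "\<bar>A + B\<bar> * Mr \<le> 4 * n + 4 * (\<bar>\<alpha>\<bar> + \<bar>\<beta>\<bar> + \<bar>\<gamma>\<bar> + \<bar>\<delta>\<bar>) * r^2"
proof -
  define \<kappa> where "\<kappa> = \<bar>A + B\<bar>"
  define \<Lambda> where "\<Lambda> = \<bar>A\<bar> + \<bar>B\<bar> + 1"
  have \<kappa>: "\<kappa> > 0" using AB by (simp add: \<kappa>_def)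
  have \<Lambda>: "\<Lambda> \<ge> 1" "\<bar>A\<bar> \<le> \<Lambda>" "\<bar>B\<bar> \<le> \<Lambda>" by (auto simp: \<Lambda>_def)
  have "1 / \<epsilon> \<le> n" using n eps by (simp add: divide_le_eq mult.commute)
  moreover have "100 \<le> 1 / \<epsilon>" using eps by (simp add: le_divide_eq mult.commute)
  ultimately have n1: "n \<ge> 100" by linarith
  define a1 where "a1 = cmod e1"
  define a2 where "a2 = cmod e2"
  define a3 where "a3 = cmod e3"
  have a0: "a1 \<ge> 0" "a2 \<ge> 0" "a3 \<ge> 0" by (auto simp: a1_def a2_def a3_def)
  have p1: "n * a1 \<le> 6 * n^2 * \<epsilon>"
  proof -
    have "n * a1 \<le> n * (6 * n * \<epsilon>)" using e(1) n1 unfolding a1_def by (intro mult_left_mono) auto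
    then show ?thesis by (simp add: power2_eq_square algebra_simps)
  qed
  have e2': "a2 \<le> 24 * (n^2 * \<epsilon>^2)" using e(2) unfolding a2_def by simp
  have p2: "a1^2 \<le> 36 * n^2 * \<epsilon>^2"
  proof -
    have "a1^2 \<le> (6 * n * \<epsilon>)^2" using e(1) a0 unfolding a1_def by (intro power_mono) auto
    then show ?thesis by (simp add: power_mult_distrib)
  qed
  have p1': "n * a1 \<le> 6 * (n^2 * \<epsilon>)" using p1 by simp
  have p2': "a1^2 \<le> 36 * (n^2 * \<epsilon>^2)" using p2 by simp
  have p3: "n \<le> n^2 * \<epsilon>"
  proof -
    have "n * 1 \<le> n * (n * \<epsilon>)" using n n1 by (intro mult_left_mono) auto
    then show ?thesis by (simp add: power2_eq_square algebra_simps)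
  qed
  have p4: "n^2 * \<epsilon>^2 \<le> n^2 * \<epsilon> / 100"
  proof -
    have "\<epsilon> * \<epsilon> \<le> \<epsilon> * (1/100)" using eps by (intro mult_left_mono) auto
    then have "\<epsilon>^2 \<le> \<epsilon> / 100" by (simp add: power2_eq_square)
    then have "n^2 * \<epsilon>^2 \<le> n^2 * (\<epsilon> / 100)" by (intro mult_left_mono) auto
    then show ?thesis by simp
  qed
  have q0: "n^2 * \<epsilon> \<le> n^2 / 100"
  proof -
    have "n^2 * \<epsilon> \<le> n^2 * (1/100)" using eps by (intro mult_left_mono) auto
    then show ?thesis by simp
  qed
  define E where "E = of_real B * (- of_real n + 2 * of_real n * e1 + e2) + of_real A * (2 * of_real n * e1 + e1^2)"
  have QE: "of_real B * X2 + of_real A * X1^2 = of_real ((A + B) * n^2) + E"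
    unfolding X1 X2 E_def by (simp add: algebra_simps power2_eq_square)
  have "cmod E \<le> \<bar>B\<bar> * (n + 2 * n * a1 + a2) + \<bar>A\<bar> * (2 * n * a1 + a1^2)"
  proof -
    have "cmod (- of_real n + 2 * of_real n * e1 + e2) \<le> n + 2 * n * a1 + a2"
      using norm3[of "- of_real n" "2 * of_real n * e1" e2] n1
      by (simp add: a1_def a2_def norm_mult)
    moreover have "cmod (2 * of_real n * e1 + e1^2) \<le> 2 * n * a1 + a1^2"
      using norm_triangle_ineq[of "2 * of_real n * e1" "e1^2"] n1
      by (simp add: a1_def norm_mult norm_power)
    ultimately have "\<bar>B\<bar> * cmod (- of_real n + 2 * of_real n * e1 + e2) + \<bar>A\<bar> * cmod (2 * of_real n * e1 + e1^2)
       \<le> \<bar>B\<bar> * (n + 2 * n * a1 + a2) + \<bar>A\<bar> * (2 * n * a1 + a1^2)"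
      by (intro add_mono mult_left_mono) auto
    moreover have "cmod E \<le> \<bar>B\<bar> * cmod (- of_real n + 2 * of_real n * e1 + e2) + \<bar>A\<bar> * cmod (2 * of_real n * e1 + e1^2)"
      unfolding E_def using norm_triangle_ineq[of "of_real B * (- of_real n + 2 * of_real n * e1 + e2)" "of_real A * (2 * of_real n * e1 + e1^2)"]
      by (simp add: norm_mult)
    ultimately show ?thesis by linarith
  qed
  also have "\<dots> \<le> \<Lambda> * (n + 2 * n * a1 + a2) + \<Lambda> * (2 * n * a1 + a1^2)"
    using \<Lambda> a0 n1 by (intro add_mono mult_right_mono) auto
  also have "\<dots> = \<Lambda> * (n + 4 * (n * a1) + a2 + a1^2)" by (simp add: algebra_simps)
  also have "\<dots> \<le> \<Lambda> * (26 * (n^2 * \<epsilon>))"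
  proof (rule mult_left_mono)
    show "n + 4 * (n * a1) + a2 + a1^2 \<le> 26 * (n^2 * \<epsilon>)"
    proof -
      have "n^2 * \<epsilon> \<ge> 0" using eps by simp
      then show ?thesis using p1' p2' p3 p4 e2' by linarith
    qed
  qed (use \<Lambda> in auto)
  also have "\<dots> = n^2 * (26 * \<Lambda> * \<epsilon>)" by (simp add: algebra_simps)
  also have "\<dots> \<le> n^2 * (\<kappa> / 2)"
  proof (rule mult_left_mono)
    have "\<epsilon> * (52 * \<Lambda>) \<le> \<kappa>" using eps(3) \<Lambda> by (simp add: \<kappa>_def \<Lambda>_def field_simps)
    then show "26 * \<Lambda> * \<epsilon> \<le> \<kappa> / 2" by (simp add: algebra_simps)
  qed auto
  finally have Eb: "cmod E \<le> n^2 * (\<kappa> / 2)" .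
  have Qlow: "cmod (of_real B * X2 + of_real A * X1^2) \<ge> \<kappa> * n^2 / 2"
  proof -
    have "cmod (of_real ((A + B) * n^2) :: complex) = \<kappa> * n^2" unfolding norm_of_real by (simp add: \<kappa>_def abs_mult)
    moreover have "cmod (of_real ((A + B) * n^2) :: complex) \<le> cmod (of_real B * X2 + of_real A * X1^2) + cmod E"
      unfolding QE using norm_triangle_ineq4[of "of_real ((A + B) * n^2) + E" E] norm_triangle_ineq2
      by (metis add_diff_cancel_right' le_diff_eq norm_minus_commute norm_triangle_ineq3)
    ultimately have "\<kappa> * n^2 \<le> cmod (of_real B * X2 + of_real A * X1^2) + cmod E" by simp
    moreover have "n^2 * (\<kappa> / 2) = \<kappa> * n^2 / 2" by simp
    ultimately show ?thesis using Eb by linarith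
  qed
  have cn1: "cmod (complex_of_real n - 1) = n - 1"
  proof -
    have "complex_of_real n - 1 = complex_of_real (n - 1)" by simp
    then show ?thesis using n1 by (simp only: norm_of_real)
  qed
  have cn2: "cmod (complex_of_real n - 2) = n - 2"
  proof -
    have "complex_of_real n - 2 = complex_of_real (n - 2)" by simp
    then show ?thesis using n1 by (simp only: norm_of_real)
  qed
  have X1b: "cmod X1 \<le> 2 * n"
  proof -
    have "cmod X1 \<le> n + a1" unfolding X1 a1_def using norm_triangle_ineq[of "of_real n" e1] n1 by simp
    moreover have "a1 \<le> n"
    proof -
      have "(6 * n) * \<epsilon> \<le> (6 * n) * (1/100)" using eps n1 by (intro mult_left_mono) auto
      then show ?thesis using e(1) n1 unfolding a1_def by linarith
    qed
    ultimately show ?thesis by simp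
  qed
  have X2b: "cmod X2 \<le> 2 * n^2"
  proof -
    have "cmod X2 \<le> n * (n - 1) + 2 * n * a1 + a2" unfolding X2 a1_def a2_def
      using norm3[of "of_real (n * (n - 1))" "2 * of_real n * e1" e2] n1 by (simp add: norm_mult abs_mult cn1)
    moreover have "n * (n - 1) \<le> n^2" using n1 by (simp add: power2_eq_square algebra_simps)
    moreover have "2 * n * a1 = 2 * (n * a1)" by simp
    moreover have "n^2 \<ge> 0" "n^2 * \<epsilon> \<ge> 0" using eps by simp_all
    ultimately show ?thesis using p1' p4 q0 e2' by linarith
  qed
  have X3b: "cmod X3 \<le> 2 * n^3"
  proof -
    have "cmod X3 \<le> n * (n - 1) * (n - 2) + 3 * (n * (n - 1)) * a1 + 3 * n * a2 + a3" unfolding X3 a1_def a2_def a3_def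
      using norm4[of "of_real (n * (n - 1) * (n - 2))" "3 * of_real (n * (n - 1)) * e1" "3 * of_real n * e2" e3] n1
      by (simp add: norm_mult abs_mult cn1 cn2)
    moreover have "n * (n - 1) * (n - 2) \<le> n^3"
    proof -
      have "(n - 1) * (n - 2) \<le> n * n" using n1 by (intro mult_mono) auto
      then have "n * ((n - 1) * (n - 2)) \<le> n * (n * n)" using n1 by (intro mult_left_mono) auto
      then show ?thesis by (simp add: power3_eq_cube mult.assoc)
    qed
    moreover have "3 * (n * (n - 1)) * a1 \<le> 3 * n * (n * a1)"
    proof -
      have "n * (n - 1) \<le> n * n" using n1 by (intro mult_left_mono) auto
      then have "(n * (n - 1)) * a1 \<le> (n * n) * a1" using a0 by (intro mult_right_mono) auto
      then show ?thesis by (simp add: algebra_simps)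
    qed
    moreover have "3 * n * (n * a1) \<le> 3 * n * (6 * n^2 * \<epsilon>)" using p1 n1 by (intro mult_left_mono) auto
    moreover have "3 * n * a2 \<le> 3 * n * (24 * n^2 * \<epsilon>^2)" using e(2) n1 unfolding a2_def by (intro mult_left_mono) auto
    moreover have "n * (n^2 * \<epsilon>) \<le> n * (n^2 / 100)" using q0 n1 by (intro mult_left_mono) auto
    moreover have "n * (n^2 * \<epsilon>^2) \<le> n * (n^2 / 10000)"
    proof -
      have "n^2 * \<epsilon>^2 \<le> n^2 / 10000" using q0 p4 by linarith
      then show ?thesis using n1 by (intro mult_left_mono) auto
    qed
    moreover have "a3 \<le> n^3 / 2"
    proof -
      have "\<epsilon>^3 \<le> (1/100)^3" using eps by (intro power_mono) auto
      then have "n^3 * \<epsilon>^3 \<le> n^3 * (1/100)^3" using n1 by (intro mult_left_mono) auto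
      then have h2: "n^3 * \<epsilon>^3 \<le> n^3 / 1000000" by (simp add: power_divide)
      have h: "a3 \<le> 144 * (n^3 * \<epsilon>^3)" using e(3) unfolding a3_def by (simp add: mult.assoc)
      have "n^3 \<ge> 0" using n1 by simp
      then show ?thesis using h h2 by linarith
    qed
    moreover have "3 * n * (6 * n^2 * \<epsilon>) = 18 * (n * (n^2 * \<epsilon>))" by (simp add: algebra_simps)
    moreover have "3 * n * (24 * n^2 * \<epsilon>^2) = 72 * (n * (n^2 * \<epsilon>^2))" by (simp add: algebra_simps)
    moreover have "n * (n^2 / 100) = n^3 / 100" "n * (n^2 / 10000) = n^3 / 10000"
      by (simp_all add: power2_eq_square power3_eq_cube)
    moreover have "n^3 \<ge> 0" using n1 by simp
    ultimately show ?thesis by linarith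
  qed
  have z0p: "cmod z0 ^ 2 = r^2" "cmod z0 ^ 3 = r^3" using z0 by auto
  have "Mr * r * cmod (of_real B * X2 + of_real A * X1^2) = cmod (f0 * z0 * (of_real B * X2 + of_real A * X1^2))"
    using f0 z0 by (simp add: norm_mult)
  also have "\<dots> \<le> cmod X3 + \<bar>\<alpha>\<bar> * r * cmod X2 + \<bar>\<beta>\<bar> * r^2 * cmod X1 + \<bar>\<gamma>\<bar> * r^3 + \<bar>\<delta>\<bar> * r^3 / Mr"
    unfolding iden using norm5[of X3 "of_real \<alpha> * z0 * X2" "of_real \<beta> * z0^2 * X1" "of_real \<gamma> * z0^3" "of_real \<delta> * z0^3 / f0"]
    by (simp add: norm_mult norm_divide norm_power z0 f0)
  finally have main: "Mr * r * cmod (of_real B * X2 + of_real A * X1^2)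
      \<le> cmod X3 + \<bar>\<alpha>\<bar> * r * cmod X2 + \<bar>\<beta>\<bar> * r^2 * cmod X1 + \<bar>\<gamma>\<bar> * r^3 + \<bar>\<delta>\<bar> * r^3 / Mr" .
  have L: "Mr * r * (\<kappa> * n^2 / 2) \<le> Mr * r * cmod (of_real B * X2 + of_real A * X1^2)"
    using Qlow Mr r by (intro mult_left_mono) auto
  have t1: "cmod X3 \<le> 2 * n * (r * n^2)"
  proof -
    have "(n * n^2) * 1 \<le> (n * n^2) * r" using r n1 by (intro mult_left_mono) auto
    then have "n^3 \<le> n * (r * n^2)" by (simp add: power3_eq_cube power2_eq_square algebra_simps)
    then show ?thesis using X3b by simp
  qed
  have t2: "\<bar>\<alpha>\<bar> * r * cmod X2 \<le> 2 * \<bar>\<alpha>\<bar> * r^2 * (r * n^2)"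
  proof -
    have "\<bar>\<alpha>\<bar> * r * cmod X2 \<le> \<bar>\<alpha>\<bar> * r * (2 * n^2)" using X2b r by (intro mult_left_mono) auto
    also have "\<dots> \<le> \<bar>\<alpha>\<bar> * (r * r * r) * (2 * n^2)"
    proof -
      have "1 * 1 \<le> r * r" using r by (intro mult_mono) auto
      then have "r * 1 \<le> r * (r * r)" using r by (intro mult_left_mono) auto
      then have "r \<le> r * r * r" by (simp add: mult.assoc)
      then show ?thesis by (intro mult_right_mono mult_left_mono) auto
    qed
    finally show ?thesis by (simp add: power2_eq_square algebra_simps)
  qed
  have t3: "\<bar>\<beta>\<bar> * r^2 * cmod X1 \<le> 2 * \<bar>\<beta>\<bar> * r^2 * (r * n^2)"
  proof -
    have "\<bar>\<beta>\<bar> * r^2 * cmod X1 \<le> \<bar>\<beta>\<bar> * r^2 * (2 * n)" using X1b by (intro mult_left_mono) auto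
    also have "\<dots> \<le> \<bar>\<beta>\<bar> * r^2 * (2 * (r * n^2))"
    proof -
      have "n * 1 \<le> n * n" using n1 by (intro mult_left_mono) auto
      moreover have "(n * n) * 1 \<le> (n * n) * r" using n1 r by (intro mult_left_mono) auto
      ultimately have "n \<le> r * n^2" by (simp add: power2_eq_square algebra_simps)
      then show ?thesis by (intro mult_left_mono) auto
    qed
    finally show ?thesis by (simp add: algebra_simps)
  qed
  have t4: "\<bar>\<gamma>\<bar> * r^3 \<le> 2 * \<bar>\<gamma>\<bar> * r^2 * (r * n^2)"
  proof -
    have "1 \<le> n^2" using n1 by (intro one_le_power) auto
    then have "1 \<le> 2 * n^2" by linarith
    then have "\<bar>\<gamma>\<bar> * r^3 * 1 \<le> \<bar>\<gamma>\<bar> * r^3 * (2 * n^2)" using r by (intro mult_left_mono) auto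
    then show ?thesis by (simp add: power3_eq_cube power2_eq_square algebra_simps)
  qed
  have t5: "\<bar>\<delta>\<bar> * r^3 / Mr \<le> 2 * \<bar>\<delta>\<bar> * r^2 * (r * n^2)"
  proof -
    have "\<bar>\<delta>\<bar> * r^3 / Mr \<le> \<bar>\<delta>\<bar> * r^3 / 1" using Mr r by (intro divide_left_mono) auto
    also have "\<dots> \<le> 2 * \<bar>\<delta>\<bar> * r^2 * (r * n^2)"
    proof -
      have "1 \<le> n^2" using n1 by (intro one_le_power) auto
    then have "1 \<le> 2 * n^2" by linarith
      then have "\<bar>\<delta>\<bar> * r^3 * 1 \<le> \<bar>\<delta>\<bar> * r^3 * (2 * n^2)" using r by (intro mult_left_mono) auto
      then show ?thesis by (simp add: power3_eq_cube power2_eq_square algebra_simps)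
    qed
    finally show ?thesis .
  qed
  have "Mr * r * (\<kappa> * n^2 / 2) \<le> (2 * n + 2 * (\<bar>\<alpha>\<bar> + \<bar>\<beta>\<bar> + \<bar>\<gamma>\<bar> + \<bar>\<delta>\<bar>) * r^2) * (r * n^2)"
    using L main t1 t2 t3 t4 t5 by (simp add: algebra_simps)
  then have "(\<kappa> * Mr) * (r * n^2 / 2) \<le> (4 * n + 4 * (\<bar>\<alpha>\<bar> + \<bar>\<beta>\<bar> + \<bar>\<gamma>\<bar> + \<bar>\<delta>\<bar>) * r^2) * (r * n^2 / 2)"
    by (simp add: algebra_simps)
  moreover have "r * n^2 / 2 > 0" using r n1 by simp
  ultimately show ?thesis unfolding \<kappa>_def by (meson mult_le_cancel_right_pos)
qed



lemma core:
  fixes f :: "complex \<Rightarrow> complex" and A B \<alpha> \<beta> \<gamma> \<delta> r Mr R \<rho> :: real and z0 :: complex and m :: nat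
  assumes f: "f holomorphic_on UNIV"
    and ode: "\<And>z. (deriv ^^ 3) f z - of_real B * f z * (deriv ^^ 2) f z
                 - of_real A * (deriv f z)\<^sup>2 + of_real \<alpha> * (deriv ^^ 2) f z
                 + of_real \<beta> * deriv f z + of_real \<gamma> * f z + of_real \<delta> = 0"
    and AB: "A + B \<noteq> 0"
    and z0: "cmod z0 = r" and r: "r \<ge> 1" and fz0: "cmod (f z0) = Mr" and Mr: "Mr \<ge> 1"
    and R: "R \<ge> 100" "R \<ge> 52 * (\<bar>A\<bar> + \<bar>B\<bar> + 1) / \<bar>A + B\<bar>"
    and nR: "real (m + 3) \<ge> R"
    and rho: "0 < \<rho>" "\<rho> \<le> 1/2" "R / 2 \<le> real (m + 3) * \<rho>"
    and bnd: "\<And>x. cmod (x - z0) = r * \<rho> \<Longrightarrow> cmod (f x) / cmod x ^ (m + 3) \<le> 3 * (Mr / r ^ (m + 3))"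
  shows "\<bar>A + B\<bar> * Mr \<le> 4 * real (m + 3) + 4 * (\<bar>\<alpha>\<bar> + \<bar>\<beta>\<bar> + \<bar>\<gamma>\<bar> + \<bar>\<delta>\<bar>) * r^2"
proof -
  define n where "n = real (m + 3)"
  define \<epsilon> where "\<epsilon> = 1 / R"
  define H where "H = (\<lambda>w. f w / w ^ (m + 3))"
  have Rpos: "R > 0" using R by simp
  have z0ne: "z0 \<noteq> 0" using z0 r by auto
  have rpos: "r > 0" using r by simp
  define H0 where "H0 = H z0"
  have nH0: "cmod H0 = Mr / r ^ (m + 3)" using z0 fz0 by (simp add: H0_def H_def norm_divide norm_power)
  have H0ne: "H0 \<noteq> 0" using nH0 Mr rpos by auto
  have f0: "f z0 = z0 ^ (m + 3) * H0" using z0ne by (simp add: H0_def H_def)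
  have f0ne: "f z0 \<noteq> 0" using fz0 Mr by auto
  have H0': "f z0 / z0 ^ (m + 3) = H0" by (simp add: H0_def H_def)
  have away: "w \<noteq> 0" if "cmod (w - z0) \<le> r * \<rho>" for w
  proof
    assume "w = 0"
    then have "r \<le> r * \<rho>" using that z0 by simp
    moreover have "r * \<rho> \<le> r * (1/2)" using rho rpos by (intro mult_left_mono) auto
    ultimately show False using rpos by simp
  qed
  have holH: "H holomorphic_on (- {0})" unfolding H_def
    using f by (intro holomorphic_intros) (auto intro: holomorphic_on_subset)
  have cb: "cball z0 (r * \<rho>) \<subseteq> - {0}"
  proof
    fix x assume "x \<in> cball z0 (r * \<rho>)"
    then have "cmod (x - z0) \<le> r * \<rho>" by (simp add: dist_norm norm_minus_commute)
    then show "x \<in> - {0}" using away by blast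
  qed
  have cauchy: "cmod ((deriv ^^ j) H z0) \<le> fact j * (3 * cmod H0) / (r * \<rho>) ^ j" for j
  proof (rule Cauchy_inequality)
    show "H holomorphic_on ball z0 (r * \<rho>)" using holH cb ball_subset_cball by (blast intro: holomorphic_on_subset)
    show "continuous_on (cball z0 (r * \<rho>)) H"
      using holomorphic_on_imp_continuous_on[OF holH] cb by (blast intro: continuous_on_subset)
    show "0 < r * \<rho>" using rpos rho by simp
    fix x assume x: "cmod (z0 - x) = r * \<rho>"
    have "cmod (H x) = cmod (f x) / cmod x ^ (m + 3)" by (simp add: H_def norm_divide norm_power)
    also have "\<dots> \<le> 3 * (Mr / r ^ (m + 3))" using bnd x by (simp add: norm_minus_commute)
    finally show "cmod (H x) \<le> 3 * cmod H0" using nH0 by simp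
  qed
  define D where "D j = (deriv ^^ j) H z0" for j
  define e where "e j = z0 ^ j * D j / H0" for j
  have ebound: "cmod (e j) \<le> 3 * fact j / \<rho> ^ j" for j
  proof -
    have "cmod (e j) = r ^ j * cmod (D j) / cmod H0" by (simp add: e_def norm_mult norm_divide norm_power z0)
    also have "\<dots> \<le> r ^ j * (fact j * (3 * cmod H0) / (r * \<rho>) ^ j) / cmod H0"
      using cauchy[of j] H0ne rpos by (intro divide_right_mono mult_left_mono) (auto simp: D_def)
    also have "\<dots> = 3 * fact j / \<rho> ^ j" using H0ne rpos rho by (simp add: field_simps power_mult_distrib)
    finally show ?thesis .
  qed
  have irho: "1 / \<rho> \<le> 2 * n * \<epsilon>"
    using rho Rpos unfolding n_def \<epsilon>_def by (simp add: field_simps)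
  have irho0: "0 \<le> 1 / \<rho>" using rho by simp
  have e1: "cmod (e 1) \<le> 6 * n * \<epsilon>"
  proof -
    have "cmod (e 1) \<le> 3 * (1 / \<rho>)" using ebound[of 1] by simp
    also have "\<dots> \<le> 3 * (2 * n * \<epsilon>)" using irho by simp
    finally show ?thesis by simp
  qed
  have e2: "cmod (e 2) \<le> 24 * n^2 * \<epsilon>^2"
  proof -
    have "cmod (e 2) \<le> 6 * (1 / \<rho>)^2" using ebound[of 2] by (simp add: power_divide)
    also have "\<dots> \<le> 6 * (2 * n * \<epsilon>)^2" using irho irho0 by (intro mult_left_mono power_mono) auto
    finally show ?thesis by (simp add: power_mult_distrib)
  qed
  have e3: "cmod (e 3) \<le> 144 * n^3 * \<epsilon>^3"
  proof -
    have f3: "fact 3 = (6::real)" by (simp add: numeral_3_eq_3)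
    have "cmod (e 3) \<le> 18 * (1 / \<rho>)^3" using ebound[of 3] by (simp add: power_divide f3)
    also have "\<dots> \<le> 18 * (2 * n * \<epsilon>)^3" using irho irho0 by (intro mult_left_mono power_mono) auto
    finally show ?thesis by (simp add: power_mult_distrib)
  qed
  note df = deriv_formulas[OF f z0ne, of m, folded H_def]
  define X1 where "X1 = of_real n + e 1"
  define X2 where "X2 = of_real (n * (n - 1)) + 2 * of_real n * e 1 + e 2"
  define X3 where "X3 = of_real (n * (n - 1) * (n - 2)) + 3 * of_real (n * (n - 1)) * e 1 + 3 * of_real n * e 2 + e 3"
  have nc: "(of_nat (m + 3) :: complex) = of_real n" "(of_nat (m + 2) :: complex) = of_real (n - 1)"
     "(of_nat (m + 1) :: complex) = of_real (n - 2)" by (simp_all add: n_def)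
  have F1: "deriv f z0 = f z0 * X1 / z0"
  proof -
    have "deriv f z0 = (deriv ^^ 1) f z0" by simp
    also have "\<dots> = of_real n * z0 ^ (m + 2) * H0 + z0 ^ (m + 3) * D 1" using df(1)[unfolded nc] by (simp add: D_def H0_def H0')
    also have "\<dots> = f z0 * X1 / z0" unfolding f0 X1_def e_def using z0ne H0ne by (simp add: field_simps power_add power2_eq_square power3_eq_cube)
    finally show ?thesis .
  qed
  have F2: "(deriv ^^ 2) f z0 = f z0 * X2 / z0^2"
  proof -
    have "(deriv ^^ 2) f z0 = of_real n * of_real (n - 1) * z0 ^ (m + 1) * H0
           + 2 * of_real n * z0 ^ (m + 2) * D 1 + z0 ^ (m + 3) * D 2" using df(2)[unfolded nc] by (simp add: D_def H0_def H0')
    also have "\<dots> = f z0 * X2 / z0^2" unfolding f0 X2_def e_def using z0ne H0ne by (simp add: field_simps power_add power2_eq_square power3_eq_cube)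
    finally show ?thesis .
  qed
  have F3: "(deriv ^^ 3) f z0 = f z0 * X3 / z0^3"
  proof -
    have "(deriv ^^ 3) f z0 = of_real n * of_real (n - 1) * of_real (n - 2) * z0 ^ m * H0
           + 3 * of_real n * of_real (n - 1) * z0 ^ (m + 1) * D 1
           + 3 * of_real n * z0 ^ (m + 2) * D 2 + z0 ^ (m + 3) * D 3" using df(3)[unfolded nc] by (simp add: D_def H0_def H0')
    also have "\<dots> = f z0 * X3 / z0^3" unfolding f0 X3_def e_def using z0ne H0ne by (simp add: field_simps power_add power2_eq_square power3_eq_cube)
    finally show ?thesis .
  qed
  have iden: "f z0 * z0 * (of_real B * X2 + of_real A * X1^2)
               = X3 + of_real \<alpha> * z0 * X2 + of_real \<beta> * z0^2 * X1 + of_real \<gamma> * z0^3 + of_real \<delta> * z0^3 / f z0"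
  proof -
    have o: "(deriv ^^ 3) f z0 - of_real B * f z0 * (deriv ^^ 2) f z0
                 - of_real A * (deriv f z0)\<^sup>2 + of_real \<alpha> * (deriv ^^ 2) f z0
                 + of_real \<beta> * deriv f z0 + of_real \<gamma> * f z0 + of_real \<delta> = 0" by (rule ode)
    have "(X3 + of_real \<alpha> * z0 * X2 + of_real \<beta> * z0^2 * X1 + of_real \<gamma> * z0^3 + of_real \<delta> * z0^3 / f z0)
          - f z0 * z0 * (of_real B * X2 + of_real A * X1^2)
        = z0^3 / f z0 * ((deriv ^^ 3) f z0 - of_real B * f z0 * (deriv ^^ 2) f z0
                 - of_real A * (deriv f z0)\<^sup>2 + of_real \<alpha> * (deriv ^^ 2) f z0
                 + of_real \<beta> * deriv f z0 + of_real \<gamma> * f z0 + of_real \<delta>)"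
      unfolding F1 F2 F3 using z0ne f0ne by (simp add: field_simps power2_eq_square power3_eq_cube)
    then show ?thesis using o by simp
  qed
  have eps: "0 < \<epsilon>" "\<epsilon> \<le> 1/100" "\<epsilon> \<le> \<bar>A + B\<bar> / (52 * (\<bar>A\<bar> + \<bar>B\<bar> + 1))"
  proof -
    show "0 < \<epsilon>" using Rpos by (simp add: \<epsilon>_def)
    show "\<epsilon> \<le> 1/100" using R by (simp add: \<epsilon>_def field_simps)
    have k: "\<bar>A + B\<bar> > 0" using AB by simp
    have L: "52 * (\<bar>A\<bar> + \<bar>B\<bar> + 1) > 0" by simp
    have "52 * (\<bar>A\<bar> + \<bar>B\<bar> + 1) \<le> R * \<bar>A + B\<bar>" using R(2) k by (simp add: divide_le_eq)
    then show "\<epsilon> \<le> \<bar>A + B\<bar> / (52 * (\<bar>A\<bar> + \<bar>B\<bar> + 1))" using Rpos L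
      by (simp add: \<epsilon>_def field_simps)
  qed
  have nn: "1 \<le> n * \<epsilon>" using nR Rpos by (simp add: n_def \<epsilon>_def field_simps)
  have "\<bar>A + B\<bar> * Mr \<le> 4 * n + 4 * (\<bar>\<alpha>\<bar> + \<bar>\<beta>\<bar> + \<bar>\<gamma>\<bar> + \<bar>\<delta>\<bar>) * r^2"
    by (rule core_alg[OF AB eps nn e1 e2 e3 z0 r fz0 Mr X1_def X2_def X3_def iden])
  then show ?thesis by (simp add: n_def)
qed



lemma MM_Phi: assumes f: "f holomorphic_on UNIV" and np: "\<not> (\<exists>p. \<forall>z. f z = poly p z)" and x: "x > 0"
  shows "MM f x = exp (Phi f (ln x))"
  using MM_pos[OF f np, of x] x by (simp add: Phi_def)

theorem corollary2:
  fixes A B \<alpha> \<beta> \<gamma> \<delta> :: real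
  assumes "A + B \<noteq> 0"
  shows "\<not> (\<exists>u. transcendental_entire u \<and>
           (\<forall>z. (deriv ^^ 3) u z - of_real B * u z * (deriv ^^ 2) u z
                 - of_real A * (deriv u z)\<^sup>2 + of_real \<alpha> * (deriv ^^ 2) u z
                 + of_real \<beta> * deriv u z + of_real \<gamma> * u z + of_real \<delta> = 0))"
proof
  assume "\<exists>u. transcendental_entire u \<and>
           (\<forall>z. (deriv ^^ 3) u z - of_real B * u z * (deriv ^^ 2) u z
                 - of_real A * (deriv u z)\<^sup>2 + of_real \<alpha> * (deriv ^^ 2) u z
                 + of_real \<beta> * deriv u z + of_real \<gamma> * u z + of_real \<delta> = 0)"
  then obtain f where te: "transcendental_entire f" and ode: "\<And>z. (deriv ^^ 3) f z - of_real B * f z * (deriv ^^ 2) f z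
                 - of_real A * (deriv f z)\<^sup>2 + of_real \<alpha> * (deriv ^^ 2) f z
                 + of_real \<beta> * deriv f z + of_real \<gamma> * f z + of_real \<delta> = 0" by blast
  have f: "f holomorphic_on UNIV" and np: "\<not> (\<exists>p. \<forall>z. f z = poly p z)"
    using te by (auto simp: transcendental_entire_def)
  define \<kappa> where "\<kappa> = \<bar>A + B\<bar>"
  define \<Gamma> where "\<Gamma> = \<bar>\<alpha>\<bar> + \<bar>\<beta>\<bar> + \<bar>\<gamma>\<bar> + \<bar>\<delta>\<bar>"
  define R where "R = max 100 (52 * (\<bar>A\<bar> + \<bar>B\<bar> + 1) / \<bar>A + B\<bar>)"
  define q where "q = 1 + 2 / R"
  define \<Phi> where "\<Phi> = Phi f"
  have \<kappa>: "\<kappa> > 0" using assms by (simp add: \<kappa>_def)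
  have R: "R \<ge> 100" "R \<ge> 52 * (\<bar>A\<bar> + \<bar>B\<bar> + 1) / \<bar>A + B\<bar>" by (auto simp: R_def)
  have q: "1 < q" "q \<le> 2" using R by (auto simp: q_def field_simps)
  have cv: "convex_on UNIV \<Phi>" unfolding \<Phi>_def by (rule Phi_convex[OF f np])
  have mo: "mono \<Phi>" unfolding \<Phi>_def by (rule Phi_mono[OF f np])
  have MMe: "MM f (exp s) = exp (\<Phi> s)" for s using MM_pos[OF f np, of "exp s"] by (simp add: \<Phi>_def Phi_def)
  have unb: "\<exists>s. \<Phi> s \<ge> y" for y
  proof (rule ccontr)
    assume "\<not> (\<exists>s. \<Phi> s \<ge> y)"
    then have b: "\<Phi> s < y" for s by (simp add: not_le)
    have "\<exists>p. \<forall>z. f z = poly p z"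
    proof (rule poly_of_growth[OF f, of "exp y" 0])
      fix S :: real
      show "\<exists>r\<ge>S. r > 0 \<and> MM f r \<le> exp y * r ^ 0"
      proof (intro exI conjI)
        show "max S 1 \<ge> S" "max S 1 > 0" by auto
        have "MM f (max S 1) = exp (\<Phi> (ln (max S 1)))" using MMe[of "ln (max S 1)"] by simp
        also have "\<dots> \<le> exp y" using b[of "ln (max S 1)"] by simp
        finally show "MM f (max S 1) \<le> exp y * max S 1 ^ 0" by simp
      qed
    qed
    then show False using np by blast
  qed
  have nopoly: "\<exists>S. \<forall>s\<ge>S. \<Phi> s > C + R * s" for C
  proof (rule ccontr)
    assume "\<not> (\<exists>S. \<forall>s\<ge>S. \<Phi> s > C + R * s)"
    then have H: "\<exists>s\<ge>S. \<Phi> s \<le> C + R * s" for S by (meson not_le)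
    define k where "k = nat \<lceil>R\<rceil>"
    have kR: "R \<le> real k" unfolding k_def by linarith
    have "\<exists>p. \<forall>z. f z = poly p z"
    proof (rule poly_of_growth[OF f, of "exp C" k])
      fix S :: real
      obtain s where s: "s \<ge> max S 0" "\<Phi> s \<le> C + R * s" using H by blast
      show "\<exists>r\<ge>S. r > 0 \<and> MM f r \<le> exp C * r ^ k"
      proof (intro exI conjI)
        have "S \<le> s" using s(1) by simp
        then show "exp s \<ge> S" using exp_ge_add_one_self[of s] by linarith
        show "exp s > 0" by simp
        have "MM f (exp s) = exp (\<Phi> s)" by (rule MMe)
        also have "\<dots> \<le> exp (C + R * s)" using s by simp
        also have "\<dots> \<le> exp (C + real k * s)" using s kR by (simp add: mult_right_mono)
        also have "\<dots> = exp C * exp s ^ k" by (simp add: exp_add exp_of_nat_mult[symmetric])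
        finally show "MM f (exp s) \<le> exp C * exp s ^ k" .
      qed
    qed
    then show False using np by blast
  qed
  define Cf where "Cf = (8 + 8 * \<Gamma>) / \<kappa> + 64 * R^2 / \<kappa>^2"
  have growth: "\<exists>r\<ge>S. r > 0 \<and> MM f r \<le> Cf * r ^ 2" for S
  proof -
    obtain s0 g where sel: "s0 \<ge> max S 0" "0 < g" "g \<le> 1" "0 \<le> \<Phi> s0" "R / g \<le> R * exp (\<Phi> s0 / 2)"
      "\<And>t. -g \<le> t \<Longrightarrow> t \<le> 0 \<Longrightarrow> \<Phi> (s0 + t) \<le> \<Phi> s0 + (R / g) * t"
      "\<And>t. 0 \<le> t \<Longrightarrow> t \<le> g / q \<Longrightarrow> \<Phi> (s0 + t) \<le> \<Phi> s0 + q * (R / g) * t"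
      using selection[OF cv mo _ q(1) unb nopoly, of "max S 0"] R by auto
    define r where "r = exp s0"
    define Mr where "Mr = MM f r"
    have r1: "r \<ge> 1" using sel(1) by (simp add: r_def)
    have "S \<le> s0" using sel(1) by simp
    then have rS: "r \<ge> S" using exp_ge_add_one_self[of s0] unfolding r_def by linarith
    have Mre: "Mr = exp (\<Phi> s0)" by (simp add: Mr_def r_def MMe)
    have Mr1: "Mr \<ge> 1" using sel(4) Mre by simp
    obtain z0 where z0: "cmod z0 = r" "cmod (f z0) = Mr" using MM_attained[OF f, of r] r1 by (auto simp: Mr_def)
    define b where "b = R / g"
    define N where "N = nat \<lceil>b\<rceil>"
    have bR: "b \<ge> R" using sel(2,3) R by (simp add: b_def field_simps)
    have Nc: "real N = of_int \<lceil>b\<rceil>" using bR R by (simp add: N_def)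
    have Nb: "b \<le> real N" "real N < b + 1" unfolding Nc by linarith+
    have N3: "N \<ge> 3" using Nb bR R by linarith
    define m where "m = N - 3"
    have Nm: "N = m + 3" using N3 by (simp add: m_def)
    define \<rho> where "\<rho> = g / 2"
    have rho: "0 < \<rho>" "\<rho> \<le> 1/2" using sel(2,3) by (auto simp: \<rho>_def)
    have NR: "real (m + 3) \<ge> R" using Nb bR Nm by simp
    have Nrho: "R / 2 \<le> real (m + 3) * \<rho>"
    proof -
      have "b * \<rho> \<le> real N * \<rho>" using Nb rho by (intro mult_right_mono) auto
      moreover have "b * \<rho> = R / 2" using sel(2) by (simp add: b_def \<rho>_def)
      ultimately show ?thesis using Nm by simp
    qed
    have key: "\<Phi> (s0 + t) \<le> \<Phi> s0 + real N * t + 1" if t: "-g \<le> t" "t \<le> g / 2" for t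
    proof (cases "t \<le> 0")
      case True
      have "\<Phi> (s0 + t) \<le> \<Phi> s0 + b * t" using sel(6)[OF t(1) True] by (simp add: b_def)
      moreover have "(real N - b) * (- t) \<le> 1 * 1"
        using Nb True t sel(3) by (intro mult_mono) auto
      ultimately show ?thesis by (simp add: algebra_simps)
    next
      case False
      have "g / 2 \<le> g / q" using q sel(2) by (intro divide_left_mono) auto
      then have "t \<le> g / q" using t by linarith
      then have "\<Phi> (s0 + t) \<le> \<Phi> s0 + q * (R / g) * t" using sel(7)[of t] False by simp
      then have "\<Phi> (s0 + t) \<le> \<Phi> s0 + q * b * t" by (simp add: b_def)
      moreover have "q * b * t = b * t + (2 / g) * t" using R sel(2) by (simp add: q_def b_def field_simps)
      moreover have "(2 / g) * t \<le> 1" using t sel(2) by (simp add: field_simps)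
      moreover have "b * t \<le> real N * t" using Nb False by (intro mult_right_mono) auto
      ultimately show ?thesis by linarith
    qed
    have bnd: "cmod (f x) / cmod x ^ (m + 3) \<le> 3 * (Mr / r ^ (m + 3))" if x: "cmod (x - z0) = r * \<rho>" for x
    proof -
      define ax where "ax = cmod x"
      have rpos: "r > 0" using r1 by simp
      have h1: "cmod x - cmod z0 \<le> cmod (x - z0)" by (rule norm_triangle_ineq2)
      have h2: "cmod z0 - cmod x \<le> cmod (x - z0)" using norm_triangle_ineq2[of z0 x] by (simp add: norm_minus_commute)
      have e1: "r * (1 - \<rho>) = r - r * \<rho>" "r * (1 + \<rho>) = r + r * \<rho>" by (simp_all add: algebra_simps)
      have ax1: "ax \<ge> r * (1 - \<rho>)" "ax \<le> r * (1 + \<rho>)"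
        unfolding e1 ax_def using h1 h2 x z0 by linarith+
      have "r * (1 - \<rho>) > 0" using rpos rho by simp
      then have axpos: "ax > 0" using ax1 by linarith
      define t where "t = ln ax - s0"
      have axe: "ax = r * exp t" using axpos by (simp add: t_def r_def exp_diff)
      have tlo: "t \<ge> - g"
      proof -
        have "exp t \<ge> 1 - \<rho>" using ax1 axe rpos by (simp add: mult_le_cancel_left_pos)
        then have "ln (1 - \<rho>) \<le> ln (exp t)" using rho by (subst ln_le_cancel_iff) auto
        then have "t \<ge> ln (1 - \<rho>)" by simp
        moreover have "ln (1 - \<rho>) \<ge> - \<rho> - 2 * \<rho>^2" using rho by (intro ln_one_minus_pos_lower_bound) auto
        moreover have "2 * \<rho>^2 \<le> \<rho>"
        proof -
          have "\<rho> * \<rho> \<le> (1/2) * \<rho>" using rho by (intro mult_right_mono) auto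
          then show ?thesis by (simp add: power2_eq_square)
        qed
        ultimately show ?thesis by (simp add: \<rho>_def)
      qed
      have thi: "t \<le> g / 2"
      proof -
        have "exp t \<le> 1 + \<rho>" using ax1 axe rpos by (simp add: mult_le_cancel_left_pos)
        then have "ln (exp t) \<le> ln (1 + \<rho>)" using rho by (subst ln_le_cancel_iff) auto
        then have "t \<le> ln (1 + \<rho>)" by simp
        moreover have "ln (1 + \<rho>) \<le> \<rho>" using rho by (intro ln_add_one_self_le_self) auto
        ultimately show ?thesis by (simp add: \<rho>_def)
      qed
      have "cmod (f x) \<le> MM f ax" using MM_ge[OF f] by (simp add: ax_def)
      also have "MM f ax = exp (\<Phi> (s0 + t))" using MMe[of "s0 + t"] axpos by (simp add: t_def)
      also have "\<dots> \<le> exp (\<Phi> s0 + real N * t + 1)" using key[OF tlo thi] by simp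
      also have "\<dots> = exp 1 * Mr * exp t ^ N" by (simp add: Mre exp_add exp_of_nat_mult[symmetric] algebra_simps)
      finally have A1: "cmod (f x) \<le> exp 1 * Mr * exp t ^ N" .
      have "cmod (f x) / cmod x ^ (m + 3) \<le> exp 1 * Mr * exp t ^ N / ax ^ N"
        using A1 axpos Nm by (simp add: ax_def divide_right_mono)
      also have "\<dots> = exp 1 * (Mr / r ^ N)" using axe rpos by (simp add: power_mult_distrib field_simps)
      also have "\<dots> \<le> 3 * (Mr / r ^ N)" using exp_le Mr1 rpos by (intro mult_right_mono) auto
      finally show ?thesis using Nm by simp
    qed
    have c: "\<bar>A + B\<bar> * Mr \<le> 4 * real (m + 3) + 4 * (\<bar>\<alpha>\<bar> + \<bar>\<beta>\<bar> + \<bar>\<gamma>\<bar> + \<bar>\<delta>\<bar>) * r^2"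
      by (rule core[OF f ode assms z0(1) r1 z0(2) Mr1 R NR rho Nrho bnd])
    have Nbd: "real N \<le> R * sqrt Mr + 1"
    proof -
      have "sqrt Mr = sqrt (exp (\<Phi> s0 / 2) ^ 2)" using Mre by (simp add: exp_double[symmetric])
      then have "exp (\<Phi> s0 / 2) = sqrt Mr" by simp
      then show ?thesis using Nb sel(5) by (simp add: b_def)
    qed
    define x where "x = sqrt Mr"
    have x1: "x \<ge> 1" "x^2 = Mr" using Mr1 by (auto simp: x_def)
    have main: "\<kappa> * x^2 \<le> 4 * R * x + 4 + 4 * \<Gamma> * r^2"
      using c Nbd Nm x1 by (simp add: \<kappa>_def \<Gamma>_def x_def algebra_simps)
    have "Mr \<le> Cf * r^2"
    proof (cases "x \<ge> 8 * R / \<kappa>")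
      case True
      have "8 * R \<le> \<kappa> * x" using True \<kappa> by (simp add: divide_le_eq mult.commute)
      then have "8 * R * x \<le> \<kappa> * x * x" using x1 by (intro mult_right_mono) auto
      then have "\<kappa> * x^2 / 2 \<le> 4 + 4 * \<Gamma> * r^2" using main by (simp add: power2_eq_square algebra_simps)
      then have "Mr \<le> (8 + 8 * \<Gamma> * r^2) / \<kappa>" using \<kappa> x1 by (simp add: field_simps)
      also have "\<dots> \<le> (8 + 8 * \<Gamma>) * r^2 / \<kappa>"
      proof -
        have "1 \<le> r^2" using r1 by (simp add: one_le_power)
        moreover have "\<Gamma> \<ge> 0" by (simp add: \<Gamma>_def)
        ultimately have "8 + 8 * \<Gamma> * r^2 \<le> (8 + 8 * \<Gamma>) * r^2" by (simp add: algebra_simps)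
        then show ?thesis using \<kappa> by (intro divide_right_mono) auto
      qed
      also have "\<dots> \<le> Cf * r^2"
      proof -
        have "(8 + 8 * \<Gamma>) / \<kappa> \<le> Cf" by (simp add: Cf_def)
        then have "((8 + 8 * \<Gamma>) / \<kappa>) * r^2 \<le> Cf * r^2" by (intro mult_right_mono) auto
        then show ?thesis by simp
      qed
      finally show ?thesis .
    next
      case False
      then have "x < 8 * R / \<kappa>" by simp
      then have "x^2 \<le> (8 * R / \<kappa>)^2" using x1 by (intro power_mono) auto
      then have "Mr \<le> 64 * R^2 / \<kappa>^2" using x1 by (simp add: power_divide power_mult_distrib)
      also have "\<dots> \<le> Cf" using \<kappa> by (simp add: Cf_def \<Gamma>_def)
      also have "\<dots> \<le> Cf * r^2"
      proof -
        have "Cf \<ge> 0" using \<kappa> by (simp add: Cf_def \<Gamma>_def)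
        moreover have "1 \<le> r^2" using r1 by (simp add: one_le_power)
        ultimately show ?thesis by (metis mult_left_mono mult.right_neutral)
      qed
      finally show ?thesis .
    qed
    then show ?thesis using rS r1 by (intro exI[of _ r]) (auto simp: Mr_def)
  qed
  have "\<exists>p. \<forall>z. f z = poly p z" by (rule poly_of_growth[OF f growth])
  then show False using np by blast
qed


end
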